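(* Let $\rho$ be a bipartite state and let $\Lambda=\{\Pi_1,\dots\}$ and $\Lambda'=\{\Pi'_1,\dots\}$ be projective measurements on the first and second registers respectively, such that $\mathrm{Tr}[(\Pi_1\otimes\Pi'_1)\rho]\ge1-\varepsilon$. Let $M=\{M_i\}_{i\in\mathcal{I}}$ be a general measurement on the first register, fix $i\in\mathcal{I}$, let $p_i=\mathrm{Tr}[(M_i^\dagger M_i\otimes I)\rho]$ be the probability of outcome $i$, and let $\tau$ be the post-measurement state of the second register after applying $M$ to the first register of $\rho$ and obtaining outcome $i$. Then $\mathrm{Tr}[\Pi'_1\tau]\ge1-\frac{\sqrt{\varepsilon}}{p_i}$. *)

theory Defs
  imports "HOL-Analysis.Analysis"
begin

text \<open>Finite-dimensional quantum systems: operators on a system with basis indexed by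
  a finite type 'n are complex matrices of type complex^'n^'n.\<close>

type_synonym 'n cmat = "complex ^'n ^'n"

definition adj :: "('n::finite) cmat \<Rightarrow> 'n cmat" where
  "adj A = (\<chi> i j. cnj (A $ j $ i))"

definition mtrace :: "('n::finite) cmat \<Rightarrow> complex" where
  "mtrace A = (\<Sum>i\<in>UNIV. A $ i $ i)"

definition kron :: "('a::finite) cmat \<Rightarrow> ('b::finite) cmat \<Rightarrow> ('a \<times> 'b) cmat" where
  "kron A B = (\<chi> p q. A $ fst p $ fst q * B $ snd p $ snd q)"

definition ptrace1 :: "(('a::finite) \<times> ('b::finite)) cmat \<Rightarrow> 'b cmat" where
  "ptrace1 R = (\<chi> j l. \<Sum>i\<in>UNIV. R $ (i, j) $ (i, l))"

definition psd :: "('n::finite) cmat \<Rightarrow> bool" where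
  "psd A \<longleftrightarrow> (\<forall>v :: complex ^'n.
      let z = (\<Sum>i\<in>UNIV. cnj (v $ i) * (A *v v) $ i) in Im z = 0 \<and> Re z \<ge> 0)"

definition density :: "('n::finite) cmat \<Rightarrow> bool" where
  "density \<rho> \<longleftrightarrow> adj \<rho> = \<rho> \<and> psd \<rho> \<and> mtrace \<rho> = 1"

definition projective_measurement :: "(nat \<Rightarrow> ('n::finite) cmat) \<Rightarrow> nat \<Rightarrow> bool" where
  "projective_measurement P m \<longleftrightarrow> m \<ge> 1 \<and>
     (\<forall>k\<in>{1..m}. adj (P k) = P k \<and> P k ** P k = P k) \<and>
     (\<forall>k\<in>{1..m}. \<forall>l\<in>{1..m}. k \<noteq> l \<longrightarrow> P k ** P l = 0) \<and>
     (\<Sum>k\<in>{1..m}. P k) = mat 1"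

definition general_measurement :: "('i \<Rightarrow> ('n::finite) cmat) \<Rightarrow> 'i set \<Rightarrow> bool" where
  "general_measurement M I \<longleftrightarrow> finite I \<and> I \<noteq> {} \<and>
     (\<Sum>i\<in>I. adj (M i) ** M i) = mat 1"

definition outcome_prob :: "('i \<Rightarrow> ('a::finite) cmat) \<Rightarrow> 'i \<Rightarrow> ('a \<times> ('b::finite)) cmat \<Rightarrow> real" where
  "outcome_prob M i R = Re (mtrace (kron (adj (M i) ** M i) (mat 1) ** R))"

definition post_state2 :: "('i \<Rightarrow> ('a::finite) cmat) \<Rightarrow> 'i \<Rightarrow> ('a \<times> ('b::finite)) cmat \<Rightarrow> 'b cmat" where
  "post_state2 M i R =
     (\<chi> j l. ptrace1 (kron (M i) (mat 1) ** R ** adj (kron (M i) (mat 1))) $ j $ l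
                 / complex_of_real (outcome_prob M i R))"

end

theory Submission imports Defs begin

lemma sum_pair: "(\<Sum>p\<in>(UNIV::('a::finite \<times> 'b::finite) set). f p) = (\<Sum>x\<in>UNIV. \<Sum>y\<in>UNIV. f (x, y))"
  by (simp add: UNIV_Times_UNIV[symmetric] sum.cartesian_product split_beta del: UNIV_Times_UNIV)

lemma mm_entry: "(A ** B) $ a $ c = (\<Sum>b\<in>UNIV. A $ a $ b * B $ b $ c)"
  by (simp add: matrix_matrix_mult_def)

lemma mat_entry: "(mat x :: 'a::zero ^'n^'n) $ a $ b = (if a = b then x else 0)"
  by (simp add: mat_def)

lemma adj_adj[simp]: "adj (adj A) = A"
  by (simp add: adj_def vec_eq_iff)

lemma adj_mult: "adj (A ** B) = adj B ** adj A"
  by (simp add: adj_def vec_eq_iff mm_entry mult.commute)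

lemma adj_mat1[simp]: "adj (mat 1) = mat 1"
  by (simp add: adj_def vec_eq_iff mat_entry)

lemma adj_add: "adj (A + B) = adj A + adj B"
  by (simp add: adj_def vec_eq_iff)

lemma adj_diff: "adj (A - B) = adj A - adj B"
  by (simp add: adj_def vec_eq_iff)

lemma mm_add_r: "(A + B) ** C = A ** C + B ** (C :: 'a::semiring_1^'n^'n)"
  by (simp add: vec_eq_iff mm_entry distrib_right sum.distrib)

lemma mm_diff_r: "(A - B) ** C = A ** C - B ** (C :: 'a::ring_1^'n^'n)"
  by (simp add: vec_eq_iff mm_entry left_diff_distrib sum_subtractf)

lemma mm_diff_l: "C ** (A - B) = C ** A - C ** (B :: 'a::ring_1^'n^'n)"
  by (simp add: vec_eq_iff mm_entry right_diff_distrib sum_subtractf)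

lemma mm_sum_r: "(\<Sum>j\<in>S. A j) ** C = (\<Sum>j\<in>S. A j ** (C :: 'a::semiring_1^'n^'n))"
  by (induction S rule: infinite_finite_induct) (auto simp: mm_add_r)

lemma mtrace_add: "mtrace (A + B) = mtrace A + mtrace B"
  by (simp add: mtrace_def sum.distrib)

lemma mtrace_diff: "mtrace (A - B) = mtrace A - mtrace B"
  by (simp add: mtrace_def sum_subtractf)

lemma mtrace_sum: "mtrace (\<Sum>j\<in>S. A j) = (\<Sum>j\<in>S. mtrace (A j))"
  by (induction S rule: infinite_finite_induct) (auto simp: mtrace_def sum.distrib)

lemma mtrace_comm: "mtrace (A ** B) = mtrace (B ** A)"
  unfolding mtrace_def mm_entry
  by (subst sum.swap) (simp add: mult.commute)

lemma mtrace_mat1: "mtrace (mat 1 ** A) = mtrace A" by simp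

lemma kron_mult: "kron A B ** kron C D = kron (A ** C) (B ** D)"
  by (simp add: vec_eq_iff kron_def mm_entry sum_pair sum_product mult_ac)

lemma kron_adj: "adj (kron A B) = kron (adj A) (adj B)"
  by (simp add: vec_eq_iff kron_def adj_def)

lemma kron_mat1: "kron (mat 1) (mat 1) = mat 1"
  by (simp add: vec_eq_iff kron_def mat_entry prod_eq_iff)

lemma kron_add_l: "kron (A + B) C = kron A C + kron B C"
  by (simp add: vec_eq_iff kron_def distrib_right)

lemma kron_diff_l: "kron (A - B) C = kron A C - kron B C"
  by (simp add: vec_eq_iff kron_def left_diff_distrib)

lemma kron_diff_r: "kron C (A - B) = kron C A - kron C B"
  by (simp add: vec_eq_iff kron_def right_diff_distrib)

lemma kron_sum_l: "kron (\<Sum>j\<in>S. A j) C = (\<Sum>j\<in>S. kron (A j) C)"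
  by (induction S rule: infinite_finite_induct) (auto simp: kron_add_l kron_def vec_eq_iff distrib_right)

lemma mtrace_ptrace1: "mtrace (Q ** ptrace1 Z) = mtrace (kron (mat 1) Q ** Z)"
proof -
  have "mtrace (kron (mat 1) Q ** Z) = (\<Sum>a\<in>UNIV. \<Sum>j\<in>UNIV. \<Sum>b\<in>UNIV. \<Sum>l\<in>UNIV.
      (if a = b then Q $ j $ l * Z $ (b, l) $ (a, j) else 0))"
    unfolding mtrace_def mm_entry kron_def mat_entry sum_pair by (intro sum.cong refl) simp
  also have "\<dots> = (\<Sum>a\<in>UNIV. \<Sum>j\<in>UNIV. \<Sum>l\<in>UNIV. Q $ j $ l * Z $ (a, l) $ (a, j))"
    by (intro sum.cong refl, subst sum.swap, simp)
  also have "\<dots> = (\<Sum>j\<in>UNIV. \<Sum>a\<in>UNIV. \<Sum>l\<in>UNIV. Q $ j $ l * Z $ (a, l) $ (a, j))"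
    by (rule sum.swap)
  also have "\<dots> = (\<Sum>j\<in>UNIV. \<Sum>l\<in>UNIV. \<Sum>a\<in>UNIV. Q $ j $ l * Z $ (a, l) $ (a, j))"
    by (rule sum.cong[OF refl], rule sum.swap)
  also have "\<dots> = mtrace (Q ** ptrace1 Z)"
    unfolding mtrace_def mm_entry ptrace1_def by (simp add: sum_distrib_left)
  finally show ?thesis ..
qed

lemma sum3_rot: "(\<Sum>i\<in>A. \<Sum>b\<in>B. \<Sum>n\<in>C. f i b n) = (\<Sum>n\<in>C. \<Sum>b\<in>B. \<Sum>i\<in>A. f i b n)"
proof -
  have "(\<Sum>i\<in>A. \<Sum>b\<in>B. \<Sum>n\<in>C. f i b n) = (\<Sum>i\<in>A. \<Sum>n\<in>C. \<Sum>b\<in>B. f i b n)"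
    by (rule sum.cong[OF refl], rule sum.swap)
  also have "\<dots> = (\<Sum>n\<in>C. \<Sum>i\<in>A. \<Sum>b\<in>B. f i b n)" by (rule sum.swap)
  also have "\<dots> = (\<Sum>n\<in>C. \<Sum>b\<in>B. \<Sum>i\<in>A. f i b n)"
    by (rule sum.cong[OF refl], rule sum.swap)
  finally show ?thesis .
qed

lemma psd_trace: "psd R \<Longrightarrow> Re (mtrace (adj G ** G ** R)) \<ge> 0"
proof -
  assume "psd R"
  define v where "v k = (\<chi> a. cnj (G $ k $ a))" for k
  have eq: "mtrace (adj G ** G ** R) = (\<Sum>k\<in>UNIV. \<Sum>i\<in>UNIV. cnj (v k $ i) * (R *v v k) $ i)"
    unfolding mtrace_def mm_entry v_def adj_def
    by (simp add: matrix_vector_mult_def sum_distrib_left sum_distrib_right mult_ac)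
       (rule trans[OF sum3_rot], rule refl)
  show ?thesis unfolding eq Re_sum
    by (rule sum_nonneg) (use \<open>psd R\<close> in \<open>auto simp: psd_def Let_def\<close>)
qed

lemma proj_sq: "adj R = R \<Longrightarrow> R ** R = R \<Longrightarrow> adj R ** R = R"
  by simp

lemma proj_compl: "adj R = R \<Longrightarrow> R ** R = R \<Longrightarrow>
    adj (mat 1 - R) ** (mat 1 - R) = (mat 1 - R :: complex^'n^'n)"
  by (simp add: adj_diff mm_diff_r mm_diff_l)

lemma mtrace_div: "mtrace (Q ** (\<chi> j l. Y $ j $ l / c)) = mtrace (Q ** Y) / c"
  by (simp add: mtrace_def mm_entry sum_divide_distrib)

lemma psd_kron: "psd R \<Longrightarrow> adj B ** B = C \<Longrightarrow> adj D ** D = E \<Longrightarrow>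
    Re (mtrace (kron C E ** R)) \<ge> 0"
  using psd_trace[of R "kron B D"] by (simp add: kron_adj kron_mult)

theorem mainTheorem9:
  fixes \<rho> :: "(('a::finite) \<times> ('b::finite)) cmat"
    and P :: "nat \<Rightarrow> 'a cmat" and m :: nat
    and Q :: "nat \<Rightarrow> 'b cmat" and m' :: nat
    and M :: "'i \<Rightarrow> 'a cmat" and I :: "'i set" and i :: 'i
    and \<epsilon> :: real
  assumes "density \<rho>"
    and "projective_measurement P m"
    and "projective_measurement Q m'"
    and "Re (mtrace (kron (P 1) (Q 1) ** \<rho>)) \<ge> 1 - \<epsilon>"
    and "general_measurement M I"
    and "i \<in> I"
    and "outcome_prob M i \<rho> > 0"
  shows "Re (mtrace (Q 1 ** post_state2 M i \<rho>)) \<ge> 1 - sqrt \<epsilon> / outcome_prob M i \<rho>"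
proof -
  have psd: "psd \<rho>" and tr1: "mtrace \<rho> = 1" using assms(1) by (auto simp: density_def)
  have P1: "adj (P 1) = P 1" "P 1 ** P 1 = P 1" using assms(2) by (auto simp: projective_measurement_def)
  have Q1: "adj (Q 1) = Q 1" "Q 1 ** Q 1 = Q 1" using assms(3) by (auto simp: projective_measurement_def)
  have fin: "finite I" and sumM: "(\<Sum>j\<in>I. adj (M j) ** M j) = mat 1"
    using assms(5) by (auto simp: general_measurement_def)
  define A where "A = adj (M i) ** M i"
  define X where "X = mat 1 - Q 1"
  define F where "F H = Re (mtrace (H ** \<rho>))" for H :: "('a \<times> 'b) cmat"
  define p where "p = outcome_prob M i \<rho>"
  have pF: "p = F (kron A (mat 1))" unfolding p_def F_def A_def outcome_prob_def ..
  have Fdiff: "F (H1 - H2) = F H1 - F H2" for H1 H2 unfolding F_def by (simp add: mm_diff_r mtrace_diff)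
  have F11: "F (kron (mat 1) (mat 1)) = 1" unfolding F_def kron_mat1 using tr1 by simp
  have a0: "F (kron A (Q 1)) \<ge> 0" unfolding F_def
    by (rule psd_kron[OF psd, where B="M i" and D="Q 1"]) (use Q1 P1 in \<open>auto simp: A_def\<close>)
  have x0: "F (kron A X) \<ge> 0" unfolding F_def
    by (rule psd_kron[OF psd, where B="M i" and D="X"]) (use Q1 P1 in \<open>auto simp: A_def X_def proj_compl\<close>)
  have d0: "F (kron (mat 1) (Q 1)) \<ge> 0" unfolding F_def
    by (rule psd_kron[OF psd, where B="mat 1" and D="Q 1"]) (use Q1 in auto)
  have e0: "F (kron (mat 1 - P 1) (Q 1)) \<ge> 0" unfolding F_def
    by (rule psd_kron[OF psd, where B="mat 1 - P 1" and D="Q 1"]) (use Q1 P1 in \<open>auto simp: P1 proj_compl\<close>)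
  have compl: "mat 1 - A = (\<Sum>j\<in>I-{i}. adj (M j) ** M j)"
  proof -
    have "A + (\<Sum>j\<in>I-{i}. adj (M j) ** M j) = mat 1"
      using sumM sum.remove[OF fin assms(6), of "\<lambda>j. adj (M j) ** M j"] by (simp add: A_def)
    thus ?thesis by (metis add_diff_cancel_left')
  qed
  have c0: "F (kron (mat 1 - A) X) \<ge> 0"
    unfolding compl kron_sum_l F_def mm_sum_r mtrace_sum Re_sum
  proof (rule sum_nonneg)
    fix j assume "j \<in> I - {i}"
    show "0 \<le> Re (mtrace (kron (adj (M j) ** M j) X ** \<rho>))"
      by (rule psd_kron[OF psd, where B="M j" and D="X"]) (use Q1 P1 in \<open>auto simp: X_def proj_compl\<close>)
  qed
  have "mtrace (Q 1 ** post_state2 M i \<rho>) =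
      mtrace (Q 1 ** ptrace1 (kron (M i) (mat 1) ** \<rho> ** adj (kron (M i) (mat 1)))) / complex_of_real p"
    unfolding post_state2_def p_def by (rule mtrace_div)
  also have "mtrace (Q 1 ** ptrace1 (kron (M i) (mat 1) ** \<rho> ** adj (kron (M i) (mat 1))))
      = mtrace (kron A (Q 1) ** \<rho>)"
  proof -
    let ?K = "kron (M i) (mat 1)"
    have "mtrace (Q 1 ** ptrace1 (?K ** \<rho> ** adj ?K)) = mtrace (kron (mat 1) (Q 1) ** (?K ** \<rho> ** adj ?K))"
      by (rule mtrace_ptrace1)
    also have "\<dots> = mtrace ((kron (mat 1) (Q 1) ** ?K ** \<rho>) ** adj ?K)"
      by (simp add: matrix_mul_assoc)
    also have "\<dots> = mtrace (adj ?K ** (kron (mat 1) (Q 1) ** ?K ** \<rho>))"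
      by (rule mtrace_comm)
    also have "\<dots> = mtrace ((adj ?K ** kron (mat 1) (Q 1) ** ?K) ** \<rho>)"
      by (simp add: matrix_mul_assoc)
    also have "adj ?K ** kron (mat 1) (Q 1) ** ?K = kron A (Q 1)"
      by (simp add: kron_adj kron_mult A_def)
    finally show ?thesis .
  qed
  finally have eq: "Re (mtrace (Q 1 ** post_state2 M i \<rho>)) = F (kron A (Q 1)) / p"
    by (simp add: F_def)
  have r1: "F (kron A X) = p - F (kron A (Q 1))"
    unfolding X_def kron_diff_r Fdiff pF ..
  have r2: "F (kron (mat 1 - A) X) = 1 - F (kron (mat 1) (Q 1)) - F (kron A X)"
    unfolding X_def kron_diff_r kron_diff_l Fdiff F11 by simp
  have r3: "F (kron (mat 1 - P 1) (Q 1)) = F (kron (mat 1) (Q 1)) - F (kron (P 1) (Q 1))"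
    unfolding kron_diff_l Fdiff ..
  have f: "F (kron (P 1) (Q 1)) \<ge> 1 - \<epsilon>" using assms(4) unfolding F_def .
  define x where "x = F (kron A X)"
  have x01: "0 \<le> x" "x \<le> 1" "x \<le> \<epsilon>" using x0 c0 d0 e0 r2 r3 f unfolding x_def by linarith+
  have "x\<^sup>2 \<le> x" using x01 mult_left_le[of x x] by (simp add: power2_eq_square)
  hence "x \<le> sqrt \<epsilon>" using x01 by (intro real_le_rsqrt) linarith
  hence "F (kron A (Q 1)) \<ge> p - sqrt \<epsilon>" using r1 unfolding x_def by linarith
  moreover have "p > 0" using assms(7) p_def by simp
  ultimately have "F (kron A (Q 1)) / p \<ge> (p - sqrt \<epsilon>) / p"
    by (intro divide_right_mono) auto
  moreover have "(p - sqrt \<epsilon>) / p = 1 - sqrt \<epsilon> / p" using \<open>p > 0\<close> by (simp add: diff_divide_distrib)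
  ultimately have "F (kron A (Q 1)) / p \<ge> 1 - sqrt \<epsilon> / p" by simp
  thus ?thesis using eq p_def by simp
qed

end
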